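(* For every integer $t\ge 2$, the set $S_t$ is in general position, i.e., no three of its points are collinear.
   Context: For integers $r\ge 1$ let $\delta_r:=3\cdot 4^{r-1}$ and $\delta_r':=(3r+1)\cdot 4^{r-1}$. For positive integers $k,l$ define $S_{k,l}\subset\mathbb{Z}^2$ recursively: $S_{k,l}:=\{(0,0)\}$ if $k\le 2$ or $l\le 2$; otherwise $S_{k,l}:=S_{k-1,l}\cup\{(x+\delta_{k+l-1},\,y+\delta_{k+l-1}'):(x,y)\in S_{k,l-1}\}$. Let $t\ge 2$ be an integer. For $0\le i\le t-3$ define $v_i:=(3(t-i),-3i)$, and let $w_0:=(0,0)$, $w_{i+1}:=w_i+v_i$ for $i=0,\dots,t-3$. For $i=0,\dots,t-2$ let $q_i:=(t+1)4^{t+1}w_i$. Define $S_t:=\bigcup_{i=0}^{t-2}\{p+q_i: p\in S_{t-i,i+2}\}$. *)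

theory Defs
  imports "HOL-Analysis.Analysis"
begin

definition delta :: "nat \<Rightarrow> int" where
  "delta r = 3 * 4 ^ (r - 1)"

definition delta' :: "nat \<Rightarrow> int" where
  "delta' r = (3 * int r + 1) * 4 ^ (r - 1)"

function Skl :: "nat \<Rightarrow> nat \<Rightarrow> (int \<times> int) set" where
  "Skl k l = (if k \<le> 2 \<or> l \<le> 2 then {(0, 0)}
     else Skl (k - 1) l \<union>
          (\<lambda>(x, y). (x + delta (k + l - 1), y + delta' (k + l - 1))) ` Skl k (l - 1))"
  by auto
termination by (relation "Wellfounded.measure (\<lambda>(k, l). k + l)") auto

definition vvec :: "nat \<Rightarrow> nat \<Rightarrow> int \<times> int" where
  "vvec t i = (3 * (int t - int i), - 3 * int i)"

fun wvec :: "nat \<Rightarrow> nat \<Rightarrow> int \<times> int" where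
  "wvec t 0 = (0, 0)"
| "wvec t (Suc i) = (fst (wvec t i) + fst (vvec t i), snd (wvec t i) + snd (vvec t i))"

definition qvec :: "nat \<Rightarrow> nat \<Rightarrow> int \<times> int" where
  "qvec t i = ((int t + 1) * 4 ^ (t + 1) * fst (wvec t i), (int t + 1) * 4 ^ (t + 1) * snd (wvec t i))"

definition St :: "nat \<Rightarrow> (int \<times> int) set" where
  "St t = (\<Union>i \<in> {0..t - 2}. (\<lambda>(x, y). (x + fst (qvec t i), y + snd (qvec t i))) ` Skl (t - i) (i + 2))"

definition to_real2 :: "int \<times> int \<Rightarrow> real \<times> real" where
  "to_real2 p = (real_of_int (fst p), real_of_int (snd p))"

definition general_position :: "(int \<times> int) set \<Rightarrow> bool" where
  "general_position P \<longleftrightarrow> (\<forall>A \<subseteq> P. card A = 3 \<longrightarrow> \<not> collinear (to_real2 ` A))"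

end

theory Submission
  imports Defs
begin

definition sx :: "nat set \<Rightarrow> int" where "sx R = (\<Sum>r\<in>R. delta r)"
definition sy :: "nat set \<Rightarrow> int" where "sy R = (\<Sum>r\<in>R. delta' r)"

lemma delta_pos: "delta r > 0" by (simp add: delta_def)
lemma delta'_pos: "delta' r > 0" by (simp add: delta'_def)

lemma sum_delta: "(\<Sum>r\<in>{1..<Suc n}. delta r) = 4^n - 1"
proof (induction n)
  case 0 then show ?case by simp
next
  case (Suc n)
  have "(\<Sum>r\<in>{1..<Suc (Suc n)}. delta r) = (\<Sum>r\<in>{1..<Suc n}. delta r) + delta (Suc n)"
    by simp
  also have "\<dots> = 4^n - 1 + 3 * 4^n" using Suc by (simp add: delta_def)
  finally show ?case by simp
qed

lemma sum_delta': "(\<Sum>r\<in>{1..<Suc n}. delta' r) = int n * 4^n"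
proof (induction n)
  case 0 then show ?case by simp
next
  case (Suc n)
  have "(\<Sum>r\<in>{1..<Suc (Suc n)}. delta' r) = (\<Sum>r\<in>{1..<Suc n}. delta' r) + delta' (Suc n)"
    by simp
  also have "\<dots> = int n * 4^n + (3 * int (Suc n) + 1) * 4^n" using Suc by (simp add: delta'_def)
  also have "\<dots> = int (Suc n) * 4 ^ Suc n" by (simp add: algebra_simps)
  finally show ?case .
qed

lemma sum_g: "(\<Sum>r\<in>{1..<Suc n}. (3 * (int (Suc n) - int r) - 1) * 4^(r - 1)) = 4^n - int (Suc n)"
proof (induction n)
  case 0 then show ?case by simp
next
  case (Suc n)
  have "(\<Sum>r\<in>{1..<Suc (Suc n)}. (3 * (int (Suc (Suc n)) - int r) - 1) * (4::int)^(r - 1))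
      = (\<Sum>r\<in>{1..<Suc n}. (3 * (int (Suc (Suc n)) - int r) - 1) * 4^(r - 1)) + 2 * 4^n"
    by simp
  also have "(\<Sum>r\<in>{1..<Suc n}. (3 * (int (Suc (Suc n)) - int r) - 1) * (4::int)^(r - 1))
      = (\<Sum>r\<in>{1..<Suc n}. (3 * (int (Suc n) - int r) - 1) * 4^(r - 1) + delta r)"
    by (rule sum.cong) (auto simp: delta_def algebra_simps)
  also have "\<dots> = 4^n - int (Suc n) + (4^n - 1)"
    using Suc.IH sum_delta[of n] by (simp del: sum.op_ivl_Suc add: sum.distrib)
  finally show ?case by simp
qed

lemma abs_g: assumes "1 \<le> r" "r < m"
  shows "\<bar>delta' r - int m * delta r\<bar> = (3 * (int m - int r) - 1) * 4^(r - 1)"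
proof -
  have "delta' r - int m * delta r = (3 * int r + 1 - 3 * int m) * 4^(r-1)"
    by (simp add: delta_def delta'_def algebra_simps)
  moreover have "3 * int r + 1 - 3 * int m < 0" using assms by simp
  ultimately have "\<bar>delta' r - int m * delta r\<bar> = \<bar>3 * int r + 1 - 3 * int m\<bar> * 4^(r-1)"
    by (simp add: abs_mult)
  also have "\<dots> = (3 * (int m - int r) - 1) * 4^(r - 1)"
    using \<open>3 * int r + 1 - 3 * int m < 0\<close> by (simp add: algebra_simps)
  finally show ?thesis .
qed

lemma sum_abs_g: assumes "m \<ge> 1"
  shows "(\<Sum>r\<in>{1..<m}. \<bar>delta' r - int m * delta r\<bar>) = 4^(m-1) - int m"
proof -
  obtain n where m: "m = Suc n" using assms by (cases m) auto
  have "(\<Sum>r\<in>{1..<m}. \<bar>delta' r - int m * delta r\<bar>)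
      = (\<Sum>r\<in>{1..<Suc n}. (3 * (int (Suc n) - int r) - 1) * 4^(r - 1))"
    unfolding m by (rule sum.cong[OF refl], rule abs_g, auto)
  also have "\<dots> = 4^n - int (Suc n)" by (rule sum_g)
  finally show ?thesis using m by simp
qed

lemma sum_abs_h: assumes "m \<ge> 1"
  shows "(\<Sum>r\<in>{1..<m}. \<bar>delta' r - (int m + 1) * delta r\<bar>) = 2 * 4^(m-1) - int m - 1"
proof -
  obtain n where m: "m = Suc n" using assms by (cases m) auto
  have "(\<Sum>r\<in>{1..<m}. \<bar>delta' r - (int m + 1) * delta r\<bar>)
      = (\<Sum>r\<in>{1..<m}. \<bar>delta' r - int m * delta r\<bar> + delta r)"
  proof (rule sum.cong)
    fix r assume r: "r \<in> {1..<m}"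
    have e: "delta' r - int m * delta r = (3 * int r + 1 - 3 * int m) * 4^(r-1)"
      by (simp add: delta_def delta'_def algebra_simps)
    have "3 * int r + 1 - 3 * int m < 0" using r by simp
    then have "delta' r - int m * delta r < 0" unfolding e by (simp add: mult_neg_pos)
    then show "\<bar>delta' r - (int m + 1) * delta r\<bar> = \<bar>delta' r - int m * delta r\<bar> + delta r"
      using delta_pos[of r] by (simp add: algebra_simps)
  qed simp
  also have "\<dots> = (4^(m-1) - int m) + (4^n - 1)"
    using sum_abs_g[OF assms] sum_delta[of n] m by (simp del: sum.op_ivl_Suc add: sum.distrib)
  finally show ?thesis using m by simp
qed

lemma diff_decomp:
  fixes g :: "nat \<Rightarrow> int"
  assumes "finite P" "finite Q" "m \<in> Q" "m \<notin> P"
  shows "sum g Q - sum g P = g m + (sum g (Q - P - {m}) - sum g (P - Q))"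
proof -
  have "sum g Q = sum g (Q \<inter> P) + sum g (Q - P)" using assms by (simp add: sum.Int_Diff)
  moreover have "sum g P = sum g (P \<inter> Q) + sum g (P - Q)" using assms by (simp add: sum.Int_Diff)
  moreover have "sum g (Q - P) = g m + sum g (Q - P - {m})"
    using assms by (simp add: sum.remove)
  moreover have "Q \<inter> P = P \<inter> Q" by blast
  ultimately show ?thesis by simp
qed

lemma signed_bound:
  fixes g :: "nat \<Rightarrow> int"
  assumes "finite S" "A \<subseteq> S" "B \<subseteq> S" "A \<inter> B = {}"
  shows "\<bar>sum g A - sum g B\<bar> \<le> (\<Sum>r\<in>S. \<bar>g r\<bar>)"
proof -
  have fA: "finite A" using assms(1,2) by (rule finite_subset[rotated])
  have fB: "finite B" using assms(1,3) by (rule finite_subset[rotated])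
  have "\<bar>sum g A - sum g B\<bar> \<le> \<bar>sum g A\<bar> + \<bar>sum g B\<bar>" by simp
  also have "\<dots> \<le> (\<Sum>r\<in>A. \<bar>g r\<bar>) + (\<Sum>r\<in>B. \<bar>g r\<bar>)"
    by (intro add_mono sum_abs)
  also have "\<dots> = (\<Sum>r\<in>A \<union> B. \<bar>g r\<bar>)" using fA fB assms by (simp add: sum.union_disjoint)
  also have "\<dots> \<le> (\<Sum>r\<in>S. \<bar>g r\<bar>)" using assms by (intro sum_mono2) auto
  finally show ?thesis .
qed

lemma topdiff:
  assumes fin: "finite P" "finite Q" and mQ: "m \<in> Q" and mP: "m \<notin> P"
    and pos: "\<forall>r\<in>P \<union> Q. r \<ge> 1"
    and agree: "\<forall>r. r > m \<longrightarrow> (r \<in> P \<longleftrightarrow> r \<in> Q)"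
  shows "sx Q - sx P > 0 \<and> int m * (sx Q - sx P) < sy Q - sy P
     \<and> sy Q - sy P < (int m + 1) * (sx Q - sx P)"
proof -
  have m1: "m \<ge> 1" using pos mQ by auto
  let ?A = "Q - P - {m}" and ?B = "P - Q"
  have AS: "?A \<subseteq> {1..<m}" using pos agree by (auto simp: not_less_iff_gr_or_eq)
  have BS: "?B \<subseteq> {1..<m}" using pos agree mP by (auto simp: not_less_iff_gr_or_eq)
  have AB: "?A \<inter> ?B = {}" by blast
  have key: "\<And>g::nat\<Rightarrow>int. sum g Q - sum g P \<ge> g m - (\<Sum>r\<in>{1..<m}. \<bar>g r\<bar>)
       \<and> sum g Q - sum g P \<le> g m + (\<Sum>r\<in>{1..<m}. \<bar>g r\<bar>)"
  proof -
    fix g :: "nat \<Rightarrow> int"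
    have "\<bar>sum g ?A - sum g ?B\<bar> \<le> (\<Sum>r\<in>{1..<m}. \<bar>g r\<bar>)"
      by (rule signed_bound[OF _ AS BS AB]) simp
    then show "sum g Q - sum g P \<ge> g m - (\<Sum>r\<in>{1..<m}. \<bar>g r\<bar>)
       \<and> sum g Q - sum g P \<le> g m + (\<Sum>r\<in>{1..<m}. \<bar>g r\<bar>)"
      using diff_decomp[OF fin mQ mP, of g] by linarith
  qed
  obtain n where n: "m = Suc n" using m1 by (cases m) auto
  have sd: "(\<Sum>r\<in>{1..<m}. \<bar>delta r\<bar>) = 4^(m-1) - 1"
    using sum_delta[of n] n delta_pos by (simp add: abs_of_pos del: sum.op_ivl_Suc)
  have X: "sx Q - sx P > 0"
    using key[of delta] sd unfolding sx_def by (simp add: delta_def)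
  have "sy Q - sy P - int m * (sx Q - sx P)
      = sum (\<lambda>r. delta' r - int m * delta r) Q - sum (\<lambda>r. delta' r - int m * delta r) P"
    unfolding sx_def sy_def by (simp add: sum_subtractf sum_distrib_left sum.distrib algebra_simps)
  moreover have "delta' m - int m * delta m = 4^(m-1)"
    by (simp add: delta_def delta'_def algebra_simps)
  ultimately have Y1: "sy Q - sy P - int m * (sx Q - sx P) > 0"
    using key[of "\<lambda>r. delta' r - int m * delta r"] sum_abs_g[OF m1] m1 by simp
  have "sy Q - sy P - (int m + 1) * (sx Q - sx P)
      = sum (\<lambda>r. delta' r - (int m + 1) * delta r) Q - sum (\<lambda>r. delta' r - (int m + 1) * delta r) P"
    unfolding sx_def sy_def by (simp add: sum_subtractf sum_distrib_left sum.distrib algebra_simps)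
  moreover have "delta' m - (int m + 1) * delta m = - 2 * 4^(m-1)"
    by (simp add: delta_def delta'_def algebra_simps)
  ultimately have Y2: "sy Q - sy P - (int m + 1) * (sx Q - sx P) < 0"
    using key[of "\<lambda>r. delta' r - (int m + 1) * delta r"] sum_abs_h[OF m1] m1 by simp
  show ?thesis using X Y1 Y2 by simp
qed


definition det3 :: "int \<times> int \<Rightarrow> int \<times> int \<Rightarrow> int \<times> int \<Rightarrow> int" where
  "det3 a b c = (fst b - fst a) * (snd c - snd a) - (snd b - snd a) * (fst c - fst a)"

lemma det3_cyc: "det3 a b c = det3 b c a"
  by (simp add: det3_def algebra_simps)
lemma det3_swap: "det3 a b c = - det3 b a c"
  by (simp add: det3_def algebra_simps)

definition sp :: "nat set \<Rightarrow> int \<times> int" where "sp R = (sx R, sy R)"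

lemma pair_lemma:
  assumes fin: "finite P" "finite Q" and ne: "P \<noteq> Q" and pos: "\<forall>r\<in>P \<union> Q. r \<ge> 1"
  shows "\<exists>s::int. (s = 1 \<or> s = -1) \<and> 0 < s * (sx Q - sx P)
     \<and> int (Max ((P - Q) \<union> (Q - P))) * (s * (sx Q - sx P)) < s * (sy Q - sy P)
     \<and> s * (sy Q - sy P) < (int (Max ((P - Q) \<union> (Q - P))) + 1) * (s * (sx Q - sx P))"
proof -
  let ?D = "(P - Q) \<union> (Q - P)"
  let ?m = "Max ?D"
  have fD: "finite ?D" using fin by simp
  have neD: "?D \<noteq> {}" using ne by blast
  have mD: "?m \<in> ?D" using fD neD by (rule Max_in)
  have agree: "\<forall>r. r > ?m \<longrightarrow> (r \<in> P \<longleftrightarrow> r \<in> Q)"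
  proof (intro allI impI)
    fix r assume "r > ?m"
    then have "r \<notin> ?D" using Max_ge[OF fD] by (meson not_le)
    then show "r \<in> P \<longleftrightarrow> r \<in> Q" by blast
  qed
  show ?thesis
  proof (cases "?m \<in> Q")
    case True
    then have "?m \<notin> P" using mD by blast
    from topdiff[OF fin True this pos agree] show ?thesis by (intro exI[of _ 1]) simp
  next
    case False
    then have mP: "?m \<in> P" using mD by blast
    have pos': "\<forall>r\<in>Q \<union> P. r \<ge> 1" using pos by blast
    have agree': "\<forall>r. r > ?m \<longrightarrow> (r \<in> Q \<longleftrightarrow> r \<in> P)" using agree by blast
    from topdiff[OF fin(2,1) mP False pos' agree'] show ?thesis
      by (intro exI[of _ "-1"]) (simp add: algebra_simps)
  qed
qed

lemma arith_core:
  fixes dx dy ex ey m M :: int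
  assumes "dx > 0" "dy < (m + 1) * dx" "ex > 0" "ey > M * ex" "m + 1 \<le> M"
  shows "dx * ey - dy * ex > 0"
proof -
  have "dx * ey > dx * (M * ex)" using assms by (intro mult_strict_left_mono) auto
  moreover have "dy * ex < ((m + 1) * dx) * ex" using assms by (intro mult_strict_right_mono) auto
  moreover have "((m + 1) * dx) * ex \<le> (M * dx) * ex"
    using assms by (intro mult_right_mono) auto
  ultimately show ?thesis by (simp add: algebra_simps)
qed

lemma core3:
  assumes fin: "finite P" "finite Q" "finite R" and pos: "\<forall>r\<in>P \<union> Q \<union> R. r \<ge> 1"
    and ne: "P \<noteq> Q" "P \<noteq> R"
    and lt: "Max ((P - Q) \<union> (Q - P)) < Max ((P - R) \<union> (R - P))"
  shows "det3 (sp P) (sp Q) (sp R) \<noteq> 0"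
proof -
  obtain s where s: "s = 1 \<or> s = -1" "0 < s * (sx Q - sx P)"
     "s * (sy Q - sy P) < (int (Max ((P - Q) \<union> (Q - P))) + 1) * (s * (sx Q - sx P))"
    using pair_lemma[OF fin(1,2) ne(1)] pos by auto
  obtain s' where s': "s' = 1 \<or> s' = -1" "0 < s' * (sx R - sx P)"
     "int (Max ((P - R) \<union> (R - P))) * (s' * (sx R - sx P)) < s' * (sy R - sy P)"
    using pair_lemma[OF fin(1,3) ne(2)] pos by auto
  have "(s * (sx Q - sx P)) * (s' * (sy R - sy P)) - (s * (sy Q - sy P)) * (s' * (sx R - sx P)) > 0"
    by (rule arith_core[OF s(2) s(3) s'(2) s'(3)]) (use lt in simp)
  then have "s * s' * det3 (sp P) (sp Q) (sp R) \<noteq> 0"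
    unfolding det3_def sp_def by (simp add: algebra_simps)
  then show ?thesis by auto
qed


lemma max_sub_lt:
  fixes S D :: "nat set"
  assumes "finite D" "S \<subseteq> D" "S \<noteq> {}" "Max D \<notin> S"
  shows "Max S < Max D"
proof -
  have fS: "finite S" using assms finite_subset by blast
  have "Max S \<in> S" using fS assms(3) by (rule Max_in)
  moreover have "Max S \<le> Max D" using assms fS by (intro Max_mono) auto
  ultimately show ?thesis using assms(4) by (metis le_neq_implies_less)
qed

lemma max_sub_eq:
  fixes S D :: "nat set"
  assumes "finite D" "S \<subseteq> D" "Max D \<in> S"
  shows "Max S = Max D"
proof -
  have fS: "finite S" using assms finite_subset by blast
  have "Max S \<le> Max D" using assms fS by (intro Max_mono) auto
  moreover have "Max D \<le> Max S" using assms fS by (intro Max_ge) auto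
  ultimately show ?thesis by simp
qed

lemma three_sets:
  assumes fin: "finite A" "finite B" "finite C" and pos: "\<forall>r\<in>A \<union> B \<union> C. r \<ge> 1"
    and ne: "A \<noteq> B" "B \<noteq> C" "A \<noteq> C"
  shows "det3 (sp A) (sp B) (sp C) \<noteq> 0"
proof -
  let ?D = "((A - B) \<union> (B - A)) \<union> ((A - C) \<union> (C - A))"
  let ?M = "Max ?D"
  have fD: "finite ?D" using fin by simp
  have neD: "?D \<noteq> {}" using ne by blast
  have MD: "?M \<in> ?D" using fD neD by (rule Max_in)
  consider "?M \<in> A \<longleftrightarrow> ?M \<in> B" | "?M \<in> A \<longleftrightarrow> ?M \<in> C" | "?M \<in> B \<longleftrightarrow> ?M \<in> C" by blast
  then show ?thesis
  proof cases
    case 1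
    have "Max ((A - B) \<union> (B - A)) < ?M"
      by (rule max_sub_lt[OF fD]) (use ne 1 in blast)+
    moreover have "Max ((A - C) \<union> (C - A)) = ?M"
      by (rule max_sub_eq[OF fD]) (use MD 1 in blast)+
    ultimately show ?thesis using core3[OF fin(1,2,3) pos ne(1,3)] by simp
  next
    case 2
    have "Max ((A - C) \<union> (C - A)) < ?M"
      by (rule max_sub_lt[OF fD]) (use ne 2 in blast)+
    moreover have "Max ((A - B) \<union> (B - A)) = ?M"
      by (rule max_sub_eq[OF fD]) (use MD 2 in blast)+
    moreover have "\<forall>r\<in>A \<union> C \<union> B. r \<ge> 1" using pos by blast
    ultimately have "det3 (sp A) (sp C) (sp B) \<noteq> 0" using core3[OF fin(1,3,2) _ ne(3,1)] by simp
    then show ?thesis by (metis det3_cyc det3_swap neg_equal_0_iff_equal)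
  next
    case 3
    have "Max ((B - C) \<union> (C - B)) < ?M"
      by (rule max_sub_lt[OF fD]) (use ne 3 in blast)+
    moreover have "Max ((B - A) \<union> (A - B)) = ?M"
      by (rule max_sub_eq[OF fD]) (use MD 3 in blast)+
    moreover have "\<forall>r\<in>B \<union> C \<union> A. r \<ge> 1" using pos by blast
    moreover have "B \<noteq> A" using ne by blast
    ultimately have "det3 (sp B) (sp C) (sp A) \<noteq> 0" using core3[OF fin(2,3,1) _ ne(2)] by simp
    then show ?thesis by (metis det3_cyc)
  qed
qed


lemma sp_insert: "finite R \<Longrightarrow> r \<notin> R \<Longrightarrow> sp (insert r R) = (sx R + delta r, sy R + delta' r)"
  by (simp add: sp_def sx_def sy_def)

declare Skl.simps[simp del]

lemma Skl_sub: "Skl k l \<subseteq> sp ` {R. R \<subseteq> {1..k + l - 1}}"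
proof (induction k l rule: Skl.induct)
  case (1 k l)
  show ?case
  proof (cases "k \<le> 2 \<or> l \<le> 2")
    case True
    then have "Skl k l = {(0,0)}" by (subst Skl.simps) (simp del: Skl.simps)
    moreover have "(0,0) = sp {}" by (simp add: sp_def sx_def sy_def)
    ultimately show ?thesis by (auto intro: image_eqI)
  next
    case False
    then have eq: "Skl k l = Skl (k - 1) l \<union>
          (\<lambda>(x, y). (x + delta (k + l - 1), y + delta' (k + l - 1))) ` Skl k (l - 1)"
      by (subst Skl.simps) (simp del: Skl.simps)
    have A: "Skl (k - 1) l \<subseteq> sp ` {R. R \<subseteq> {1..k + l - 1}}"
    proof -
      have sub: "{1..k - 1 + l - 1} \<subseteq> {1..k + l - 1}" by auto
      have "Skl (k - 1) l \<subseteq> sp ` {R. R \<subseteq> {1..k - 1 + l - 1}}" using 1(1) False by blast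
      also have "\<dots> \<subseteq> sp ` {R. R \<subseteq> {1..k + l - 1}}" using sub by (intro image_mono Collect_mono) blast
      finally show ?thesis .
    qed
    have B: "(\<lambda>(x, y). (x + delta (k + l - 1), y + delta' (k + l - 1))) ` Skl k (l - 1)
        \<subseteq> sp ` {R. R \<subseteq> {1..k + l - 1}}"
    proof
      fix p assume "p \<in> (\<lambda>(x, y). (x + delta (k + l - 1), y + delta' (k + l - 1))) ` Skl k (l - 1)"
      then obtain q where q: "q \<in> Skl k (l - 1)"
        and p: "p = (fst q + delta (k + l - 1), snd q + delta' (k + l - 1))" by auto
      obtain R where R: "R \<subseteq> {1..k + (l - 1) - 1}" "q = sp R" using 1(2) False q by blast
      have fR: "finite R" using R(1) finite_subset by blast
      have nR: "k + l - 1 \<notin> R"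
      proof
        assume "k + l - 1 \<in> R"
        then have "k + l - 1 \<in> {1..k + (l - 1) - 1}" using R(1) by blast
        then have "k + l - 1 \<le> k + (l - 1) - 1" by simp
        then show False using False by linarith
      qed
      have "p = sp (insert (k + l - 1) R)" using p R(2) sp_insert[OF fR nR] by (simp add: sp_def)
      moreover have "insert (k + l - 1) R \<subseteq> {1..k + l - 1}" using R(1) False by (auto simp: subset_iff)
      ultimately show "p \<in> sp ` {R. R \<subseteq> {1..k + l - 1}}" by (intro image_eqI) auto
    qed
    show ?thesis using A B eq by (simp only:) blast
  qed
qed

definition pts :: "nat \<Rightarrow> nat \<Rightarrow> nat set \<Rightarrow> int \<times> int" where
  "pts t i R = (fst (qvec t i) + sx R, snd (qvec t i) + sy R)"

lemma St_mem:
  assumes "p \<in> St t" "t \<ge> 2"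
  shows "\<exists>i R. i \<le> t - 2 \<and> R \<subseteq> {1..t+1} \<and> p = pts t i R"
proof -
  from assms obtain i q where i: "i \<in> {0..t-2}" and q: "q \<in> Skl (t - i) (i + 2)"
    and p: "p = (fst q + fst (qvec t i), snd q + snd (qvec t i))"
    unfolding St_def by (auto simp del: Skl.simps)
  have "t - i + (i + 2) - 1 = t + 1" using i assms by auto
  then obtain R where R: "R \<subseteq> {1..t+1}" "q = sp R" using Skl_sub[of "t - i" "i + 2"] q by auto
  have "p = pts t i R" using p R by (simp add: pts_def sp_def)
  then show ?thesis using i R by auto
qed

lemma sx_bounds: assumes "R \<subseteq> {1..n}" shows "0 \<le> sx R" "sx R \<le> 4^n - 1"
proof -
  show "0 \<le> sx R" unfolding sx_def using delta_pos by (simp add: sum_nonneg less_imp_le)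
  have "sx R \<le> (\<Sum>r\<in>{1..<Suc n}. delta r)" unfolding sx_def
    using assms delta_pos by (intro sum_mono2) (auto simp: less_imp_le)
  then show "sx R \<le> 4^n - 1" by (simp only: sum_delta)
qed

lemma sy_bounds: assumes "R \<subseteq> {1..n}" shows "0 \<le> sy R" "sy R \<le> int n * 4^n"
proof -
  show "0 \<le> sy R" unfolding sy_def using delta'_pos by (simp add: sum_nonneg less_imp_le)
  have "sy R \<le> (\<Sum>r\<in>{1..<Suc n}. delta' r)" unfolding sy_def
    using assms delta'_pos by (intro sum_mono2) (auto simp: less_imp_le)
  then show "sy R \<le> int n * 4^n" by (simp only: sum_delta')
qed

lemma w_closed: "2 * fst (wvec t i) = 3 * (2 * int t * int i - int i * (int i - 1))
   \<and> 2 * snd (wvec t i) = - 3 * (int i * (int i - 1))"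
  by (induction i) (auto simp: vvec_def algebra_simps)


definition CC :: "nat \<Rightarrow> int" where "CC t = (int t + 1) * 4^(t+1)"

lemma CC_pos: "CC t > 0" by (simp add: CC_def)

lemma q_closed: "2 * fst (qvec t i) = CC t * (3 * (2 * int t * int i - int i * (int i - 1)))
   \<and> 2 * snd (qvec t i) = CC t * (- 3 * (int i * (int i - 1)))"
proof -
  have "2 * fst (qvec t i) = CC t * (2 * fst (wvec t i))" "2 * snd (qvec t i) = CC t * (2 * snd (wvec t i))"
    by (simp_all add: qvec_def CC_def algebra_simps)
  then show ?thesis using w_closed[of t i] by simp
qed

lemma qdiff:
  assumes "i < j" "j \<le> t - 2" "t \<ge> 2"
  shows "fst (qvec t j) - fst (qvec t i) \<ge> 9 * CC t" "snd (qvec t j) - snd (qvec t i) \<le> 0"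
proof -
  define I J T where "I = int i" "J = int j" "T = int t"
  have IJ: "J - I \<ge> 1" "2 * T - I - J + 1 \<ge> 6" "I \<ge> 0" using assms by (auto simp: I_J_T_def)
  have e1: "2 * (fst (qvec t j) - fst (qvec t i)) = CC t * (3 * ((J - I) * (2 * T - I - J + 1)))"
    using q_closed[of t i] q_closed[of t j] unfolding I_J_T_def by (simp add: algebra_simps)
  have "(J - I) * (2 * T - I - J + 1) \<ge> 1 * 6" using IJ by (intro mult_mono) auto
  then have "CC t * (3 * ((J - I) * (2 * T - I - J + 1))) \<ge> CC t * 18"
    using CC_pos[of t] by (intro mult_left_mono) auto
  then show "fst (qvec t j) - fst (qvec t i) \<ge> 9 * CC t" using e1 by simp
  have e2: "2 * (snd (qvec t j) - snd (qvec t i)) = - CC t * (3 * ((J - I) * (J + I - 1)))"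
    using q_closed[of t i] q_closed[of t j] unfolding I_J_T_def by (simp add: algebra_simps)
  have "(J - I) * (J + I - 1) \<ge> 0" using IJ by simp
  then have "CC t * (3 * ((J - I) * (J + I - 1))) \<ge> 0" using CC_pos[of t] by simp
  then show "snd (qvec t j) - snd (qvec t i) \<le> 0" using e2 by simp
qed

lemma diff_bounds:
  assumes "P \<subseteq> {1..t+1}" "R \<subseteq> {1..t+1}"
  shows "\<bar>sx R - sx P\<bar> \<le> CC t" "\<bar>sy R - sy P\<bar> \<le> CC t"
proof -
  have "(4::int)^(t+1) \<le> CC t" unfolding CC_def by simp
  then show "\<bar>sx R - sx P\<bar> \<le> CC t" using sx_bounds[OF assms(1)] sx_bounds[OF assms(2)] by linarith
  have "int (t+1) * 4^(t+1) = CC t" unfolding CC_def by simp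
  then show "\<bar>sy R - sy P\<bar> \<le> CC t" using sy_bounds[OF assms(1)] sy_bounds[OF assms(2)] by linarith
qed

lemma arith_a:
  fixes dx dy X Y :: int
  assumes "dx > 0" "dy > dx" "X > 0" "Y < X"
  shows "dx * Y - dy * X < 0"
proof -
  have "dx * Y < dx * X" using assms by simp
  moreover have "dx * X < dy * X" using assms by simp
  ultimately show ?thesis by simp
qed

lemma caseA_pos:
  assumes "i < j" "j \<le> t - 2" "t \<ge> 2" "\<bar>ex\<bar> \<le> CC t" "\<bar>ey\<bar> \<le> CC t"
  shows "fst (qvec t j) - fst (qvec t i) + ex > 0
     \<and> snd (qvec t j) - snd (qvec t i) + ey < fst (qvec t j) - fst (qvec t i) + ex"
  using qdiff[OF assms(1-3)] assms(4,5) CC_pos[of t] by linarith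

lemma caseA:
  assumes "i \<noteq> j" "i \<le> t - 2" "j \<le> t - 2" "t \<ge> 2" "P \<noteq> Q"
    "P \<subseteq> {1..t+1}" "Q \<subseteq> {1..t+1}" "R \<subseteq> {1..t+1}"
  shows "det3 (pts t i P) (pts t i Q) (pts t j R) \<noteq> 0"
proof -
  have fin: "finite P" "finite Q" using assms finite_subset by blast+
  have pos: "\<forall>r\<in>P \<union> Q. r \<ge> 1" using assms by auto
  obtain s where s: "s = 1 \<or> s = -1" "0 < s * (sx Q - sx P)"
     "int (Max ((P - Q) \<union> (Q - P))) * (s * (sx Q - sx P)) < s * (sy Q - sy P)"
    using pair_lemma[OF fin assms(5) pos] by auto
  have "(P - Q) \<union> (Q - P) \<noteq> {}" using assms(5) by blast
  then have "Max ((P - Q) \<union> (Q - P)) \<in> (P - Q) \<union> (Q - P)" using fin by (intro Max_in) auto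
  then have m1: "int (Max ((P - Q) \<union> (Q - P))) \<ge> 1" using pos by auto
  have dy: "s * (sy Q - sy P) > s * (sx Q - sx P)"
  proof -
    have "1 * (s * (sx Q - sx P)) \<le> int (Max ((P - Q) \<union> (Q - P))) * (s * (sx Q - sx P))"
      using m1 s(2) by (intro mult_right_mono) auto
    then show ?thesis using s(3) by simp
  qed
  let ?X = "fst (qvec t j) - fst (qvec t i) + (sx R - sx P)"
  let ?Y = "snd (qvec t j) - snd (qvec t i) + (sy R - sy P)"
  have det: "det3 (pts t i P) (pts t i Q) (pts t j R) = (sx Q - sx P) * ?Y - (sy Q - sy P) * ?X"
    by (simp add: det3_def pts_def algebra_simps)
  have "s * ((sx Q - sx P) * ?Y - (sy Q - sy P) * ?X) \<noteq> 0"
  proof (cases "i < j")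
    case True
    have "?X > 0 \<and> ?Y < ?X"
      by (rule caseA_pos[OF True assms(3,4)]) (use diff_bounds[OF assms(6,8)] in auto)
    then have "(s * (sx Q - sx P)) * ?Y - (s * (sy Q - sy P)) * ?X < 0"
      using arith_a[OF s(2) dy] by blast
    then show ?thesis by (simp add: algebra_simps)
  next
    case False
    then have ji: "j < i" using assms(1) by simp
    let ?X' = "fst (qvec t i) - fst (qvec t j) + (sx P - sx R)"
    let ?Y' = "snd (qvec t i) - snd (qvec t j) + (sy P - sy R)"
    have "?X' > 0 \<and> ?Y' < ?X'"
      by (rule caseA_pos[OF ji assms(2,4)]) (use diff_bounds[OF assms(8,6)] in auto)
    then have "(s * (sx Q - sx P)) * ?Y' - (s * (sy Q - sy P)) * ?X' < 0"
      using arith_a[OF s(2) dy] by blast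
    then show ?thesis by (simp add: algebra_simps)
  qed
  then show ?thesis using det by simp
qed


lemma arith_b:
  fixes D1x D1y D2x D2y f1x f1y f2x f2y C T1 T2 M :: int
  assumes f: "\<bar>f1x\<bar> \<le> C" "\<bar>f1y\<bar> \<le> C" "\<bar>f2x\<bar> \<le> C" "\<bar>f2y\<bar> \<le> C" and C: "C > 0"
    and D1: "\<bar>D1x\<bar> + \<bar>D1y\<bar> \<le> C * T1" and D2: "\<bar>D2x\<bar> + \<bar>D2y\<bar> \<le> C * T2"
    and main: "\<bar>4 * (D1x * D2y - D1y * D2x)\<bar> = C * C * M" and M: "M > 4 * (T1 + T2) + 8"
  shows "(D1x + f1x) * (D2y + f2y) - (D1y + f1y) * (D2x + f2x) \<noteq> 0"
proof -
  define E where "E = D1x * f2y + f1x * D2y + f1x * f2y - D1y * f2x - f1y * D2x - f1y * f2x"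
  have full: "(D1x + f1x) * (D2y + f2y) - (D1y + f1y) * (D2x + f2x) = (D1x * D2y - D1y * D2x) + E"
    unfolding E_def by (simp add: algebra_simps)
  have b1: "\<bar>D1x * f2y\<bar> \<le> \<bar>D1x\<bar> * C" unfolding abs_mult using f by (intro mult_left_mono) auto
  have b2: "\<bar>f1x * D2y\<bar> \<le> C * \<bar>D2y\<bar>" unfolding abs_mult using f by (intro mult_right_mono) auto
  have b3: "\<bar>f1x * f2y\<bar> \<le> C * C" unfolding abs_mult using f C by (intro mult_mono) auto
  have b4: "\<bar>D1y * f2x\<bar> \<le> \<bar>D1y\<bar> * C" unfolding abs_mult using f by (intro mult_left_mono) auto
  have b5: "\<bar>f1y * D2x\<bar> \<le> C * \<bar>D2x\<bar>" unfolding abs_mult using f by (intro mult_right_mono) auto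
  have b6: "\<bar>f1y * f2x\<bar> \<le> C * C" unfolding abs_mult using f C by (intro mult_mono) auto
  have "\<bar>E\<bar> \<le> (\<bar>D1x\<bar> + \<bar>D1y\<bar>) * C + C * (\<bar>D2x\<bar> + \<bar>D2y\<bar>) + 2 * (C * C)"
  proof -
    have "E \<le> \<bar>D1x\<bar> * C + C * \<bar>D2y\<bar> + C * C + \<bar>D1y\<bar> * C + C * \<bar>D2x\<bar> + C * C"
      "- E \<le> \<bar>D1x\<bar> * C + C * \<bar>D2y\<bar> + C * C + \<bar>D1y\<bar> * C + C * \<bar>D2x\<bar> + C * C"
      unfolding E_def using b1 b2 b3 b4 b5 b6 unfolding abs_le_iff by linarith+
    then show ?thesis by (simp add: abs_le_iff algebra_simps)
  qed
  also have "\<dots> \<le> (C * T1) * C + C * (C * T2) + 2 * (C * C)"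
    using D1 D2 C by (intro add_mono mult_right_mono mult_left_mono) auto
  finally have "4 * \<bar>E\<bar> \<le> C * C * (4 * (T1 + T2) + 8)" by (simp add: algebra_simps)
  also have "\<dots> < C * C * M" using M C by (intro mult_strict_left_mono) auto
  finally have "4 * \<bar>E\<bar> < \<bar>4 * (D1x * D2y - D1y * D2x)\<bar>" using main by simp
  then show ?thesis unfolding full by auto
qed

lemma poly_det:
  fixes I J K T :: int
  shows "(3 * (2 * T * J - J * (J - 1)) - 3 * (2 * T * I - I * (I - 1))) * (- 3 * (K * (K - 1)) - - 3 * (J * (J - 1)))
       - (- 3 * (J * (J - 1)) - - 3 * (I * (I - 1))) * (3 * (2 * T * K - K * (K - 1)) - 3 * (2 * T * J - J * (J - 1)))
       = - (18 * T * (J - I) * (K - J) * (K - I))"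
  by algebra

lemma qsum:
  assumes "i < j" "j \<le> t - 2" "t \<ge> 2"
  shows "\<bar>fst (qvec t j) - fst (qvec t i)\<bar> + \<bar>snd (qvec t j) - snd (qvec t i)\<bar>
     = CC t * (3 * int t * (int j - int i))"
proof -
  have x: "fst (qvec t j) - fst (qvec t i) \<ge> 0" using qdiff[OF assms] CC_pos[of t] by linarith
  have y: "snd (qvec t j) - snd (qvec t i) \<le> 0" using qdiff[OF assms] by linarith
  have "2 * ((fst (qvec t j) - fst (qvec t i)) - (snd (qvec t j) - snd (qvec t i)))
      = 2 * (CC t * (3 * int t * (int j - int i)))"
    using q_closed[of t i] q_closed[of t j] by (simp add: algebra_simps)
  then show ?thesis using x y by simp
qed

lemma caseB:
  assumes "i < j" "j < k" "k \<le> t - 2" "t \<ge> 2"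
    "P \<subseteq> {1..t+1}" "Q \<subseteq> {1..t+1}" "R \<subseteq> {1..t+1}"
  shows "det3 (pts t i P) (pts t j Q) (pts t k R) \<noteq> 0"
proof -
  define D1x where "D1x = fst (qvec t j) - fst (qvec t i)"
  define D1y where "D1y = snd (qvec t j) - snd (qvec t i)"
  define D2x where "D2x = fst (qvec t k) - fst (qvec t j)"
  define D2y where "D2y = snd (qvec t k) - snd (qvec t j)"
  define a where "a = int j - int i"
  define b where "b = int k - int j"
  have ab: "a \<ge> 1" "b \<ge> 1" using assms by (auto simp: a_def b_def)
  have det: "det3 (pts t i P) (pts t j Q) (pts t k R)
     = (D1x + (sx Q - sx P)) * (D2y + (sy R - sy Q)) - (D1y + (sy Q - sy P)) * (D2x + (sx R - sx Q))"
    unfolding D1x_def D1y_def D2x_def D2y_def by (simp add: det3_def pts_def algebra_simps)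
  have jle: "j \<le> t - 2" using assms by simp
  have s1: "\<bar>D1x\<bar> + \<bar>D1y\<bar> \<le> CC t * (3 * int t * a)"
    using qsum[OF assms(1) jle assms(4)] unfolding D1x_def D1y_def a_def by simp
  have s2: "\<bar>D2x\<bar> + \<bar>D2y\<bar> \<le> CC t * (3 * int t * b)"
    using qsum[OF assms(2,3,4)] unfolding D2x_def D2y_def b_def by simp
  have ab_eq: "int k - int i = a + b" unfolding a_def b_def by simp
    define X where "X = (\<lambda>n::nat. 3 * (2 * int t * int n - int n * (int n - 1)))"
    define Y where "Y = (\<lambda>n::nat. - 3 * (int n * (int n - 1)))"
    have h1: "2 * D1x = CC t * (X j - X i)" "2 * D1y = CC t * (Y j - Y i)"
      "2 * D2x = CC t * (X k - X j)" "2 * D2y = CC t * (Y k - Y j)"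
      unfolding D1x_def D1y_def D2x_def D2y_def X_def Y_def
      using q_closed[of t i] q_closed[of t j] q_closed[of t k] by (simp_all add: right_diff_distrib)
    have h2: "(2 * D1x) * (2 * D2y) - (2 * D1y) * (2 * D2x)
        = (CC t * CC t) * ((X j - X i) * (Y k - Y j) - (Y j - Y i) * (X k - X j))"
      unfolding h1 by (simp add: algebra_simps)
    have h3: "(X j - X i) * (Y k - Y j) - (Y j - Y i) * (X k - X j)
        = - (18 * int t * (int j - int i) * (int k - int j) * (int k - int i))"
      unfolding X_def Y_def by (rule poly_det)
    have "(2 * D1x) * (2 * D2y) - (2 * D1y) * (2 * D2x) = (CC t * CC t) * (- (18 * int t * (int j - int i) * (int k - int j) * (int k - int i)))"
      using h2 h3 by simp
  then have "(2 * D1x) * (2 * D2y) - (2 * D1y) * (2 * D2x) = (CC t * CC t) * (- (18 * int t * a * b * (a + b)))"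
    by (simp only: a_def[symmetric] b_def[symmetric] ab_eq)
  moreover have "4 * (D1x * D2y - D1y * D2x) = (2 * D1x) * (2 * D2y) - (2 * D1y) * (2 * D2x)"
    by (simp add: algebra_simps)
  ultimately have e4: "4 * (D1x * D2y - D1y * D2x) = - (CC t * CC t * (18 * int t * a * b * (a + b)))"
    by simp
  have "18 * int t * a * b * (a + b) \<ge> 0" using ab by simp
  then have "CC t * CC t * (18 * int t * a * b * (a + b)) \<ge> 0" using CC_pos[of t] by simp
  then have main: "\<bar>4 * (D1x * D2y - D1y * D2x)\<bar> = CC t * CC t * (18 * int t * a * b * (a + b))"
    unfolding e4 by simp
  have M: "18 * int t * a * b * (a + b) > 4 * (3 * int t * a + 3 * int t * b) + 8"
  proof -
    define u where "u = int t * (a + b)"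
    define v where "v = a * b"
    have "v \<ge> 1 * 1" unfolding v_def using ab by (intro mult_mono) auto
    have "int t \<ge> 2" "a + b \<ge> 2" using assms ab by auto
    then have "u \<ge> 2 * 2" unfolding u_def by (intro mult_mono) auto
    have "u * v \<ge> u * 1" using \<open>v \<ge> 1 * 1\<close> \<open>u \<ge> 2 * 2\<close> by (intro mult_left_mono) auto
    moreover have "18 * int t * a * b * (a + b) = 18 * (u * v)" unfolding u_def v_def by (simp add: algebra_simps)
    moreover have "4 * (3 * int t * a + 3 * int t * b) + 8 = 12 * u + 8" unfolding u_def by (simp add: algebra_simps)
    ultimately show ?thesis using \<open>u \<ge> 2 * 2\<close> by linarith
  qed
  show ?thesis unfolding det
    by (rule arith_b[OF _ _ _ _ CC_pos s1 s2 main M])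
       (use diff_bounds[OF assms(5,6)] diff_bounds[OF assms(6,7)] in auto)
qed


lemma det3_same_block: "det3 (pts t i A) (pts t i B) (pts t i C) = det3 (sp A) (sp B) (sp C)"
  by (simp add: det3_def pts_def sp_def algebra_simps)

lemma sorted_case:
  assumes t: "t \<ge> 2" and ord: "i1 \<le> i2" "i2 \<le> i3" "i3 \<le> t - 2"
    and R: "R1 \<subseteq> {1..t+1}" "R2 \<subseteq> {1..t+1}" "R3 \<subseteq> {1..t+1}"
    and ne: "pts t i1 R1 \<noteq> pts t i2 R2" "pts t i2 R2 \<noteq> pts t i3 R3" "pts t i1 R1 \<noteq> pts t i3 R3"
  shows "det3 (pts t i1 R1) (pts t i2 R2) (pts t i3 R3) \<noteq> 0"
proof -
  have fin: "finite R1" "finite R2" "finite R3" using R finite_subset by blast+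
  show ?thesis
  proof (cases "i1 = i2")
    case e12: True
    show ?thesis
    proof (cases "i2 = i3")
      case True
      have "R1 \<noteq> R2" "R2 \<noteq> R3" "R1 \<noteq> R3" using ne e12 True by auto
      moreover have "\<forall>r\<in>R1 \<union> R2 \<union> R3. r \<ge> 1" using R by auto
      ultimately show ?thesis using three_sets[OF fin] e12 True det3_same_block by metis
    next
      case False
      have "R1 \<noteq> R2" using ne e12 by auto
      then show ?thesis using caseA[of i2 i3 t R1 R2 R3] e12 False ord t R by simp
    qed
  next
    case n12: False
    show ?thesis
    proof (cases "i2 = i3")
      case True
      have "R2 \<noteq> R3" using ne True by auto
      then have "det3 (pts t i2 R2) (pts t i2 R3) (pts t i1 R1) \<noteq> 0"
        using caseA[of i2 i1 t R2 R3 R1] n12 ord t R by simp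
      then show ?thesis using True det3_cyc by metis
    next
      case False
      then show ?thesis using caseB[of i1 i2 i3 t R1 R2 R3] n12 ord t R by simp
    qed
  qed
qed

lemma St_det:
  assumes t: "t \<ge> 2" and mem: "a \<in> St t" "b \<in> St t" "c \<in> St t"
    and ne: "a \<noteq> b" "b \<noteq> c" "a \<noteq> c"
  shows "det3 a b c \<noteq> 0"
proof -
  obtain i1 R1 where A: "i1 \<le> t - 2" "R1 \<subseteq> {1..t+1}" "a = pts t i1 R1" using St_mem[OF mem(1) t] by blast
  obtain i2 R2 where B: "i2 \<le> t - 2" "R2 \<subseteq> {1..t+1}" "b = pts t i2 R2" using St_mem[OF mem(2) t] by blast
  obtain i3 R3 where C: "i3 \<le> t - 2" "R3 \<subseteq> {1..t+1}" "c = pts t i3 R3" using St_mem[OF mem(3) t] by blast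
  have sw: "\<And>x y z. det3 x y z \<noteq> 0 \<Longrightarrow> det3 y x z \<noteq> 0" by (metis det3_swap neg_equal_0_iff_equal)
  have cy: "\<And>x y z. det3 x y z \<noteq> 0 \<Longrightarrow> det3 y z x \<noteq> 0" by (metis det3_cyc)
  consider "i1 \<le> i2" "i2 \<le> i3" | "i1 \<le> i3" "i3 \<le> i2" | "i2 \<le> i1" "i1 \<le> i3"
    | "i2 \<le> i3" "i3 \<le> i1" | "i3 \<le> i1" "i1 \<le> i2" | "i3 \<le> i2" "i2 \<le> i1" by linarith
  then show ?thesis
  proof cases
    case 1 then show ?thesis using sorted_case[OF t 1 _ A(2) B(2) C(2)] A B C ne by auto
  next
    case 2 then have "det3 a c b \<noteq> 0" using sorted_case[OF t 2 _ A(2) C(2) B(2)] A B C ne by auto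
    then show ?thesis by (metis sw cy)
  next
    case 3 then have "det3 b a c \<noteq> 0" using sorted_case[OF t 3 _ B(2) A(2) C(2)] A B C ne by auto
    then show ?thesis by (metis sw)
  next
    case 4 then have "det3 b c a \<noteq> 0" using sorted_case[OF t 4 _ B(2) C(2) A(2)] A B C ne by auto
    then show ?thesis by (metis cy)
  next
    case 5 then have "det3 c a b \<noteq> 0" using sorted_case[OF t 5 _ C(2) A(2) B(2)] A B C ne by auto
    then show ?thesis by (metis cy)
  next
    case 6 then have "det3 c b a \<noteq> 0" using sorted_case[OF t 6 _ C(2) B(2) A(2)] A B C ne by auto
    then show ?thesis by (metis sw cy)
  qed
qed

lemma par0: fixes x y :: "real \<times> real" assumes "y = k *\<^sub>R x"
  shows "fst x * snd y - snd x * fst y = 0"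
  using assms by (simp add: algebra_simps)

lemma collinear_det:
  assumes "collinear {to_real2 a, to_real2 b, to_real2 c}"
  shows "det3 b a c = 0"
proof -
  let ?u = "to_real2 a - to_real2 b" and ?v = "to_real2 c - to_real2 b"
  have "collinear {0, ?u, ?v}" using assms collinear_3[of "to_real2 a" "to_real2 b" "to_real2 c"] by simp
  then have disj: "?u = 0 \<or> ?v = 0 \<or> (\<exists>k. ?v = k *\<^sub>R ?u)" by (simp add: collinear_lemma)
  have "fst ?u * snd ?v - snd ?u * fst ?v = 0"
    using disj
  proof (elim disjE exE)
    assume "?u = 0" then show ?thesis by (simp only: fst_zero snd_zero mult_zero_left mult_zero_right diff_self)
  next
    assume "?v = 0" then show ?thesis by (simp only: fst_zero snd_zero mult_zero_left mult_zero_right diff_self)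
  next
    fix k assume "?v = k *\<^sub>R ?u" then show ?thesis by (rule par0)
  qed
  moreover have "fst ?u * snd ?v - snd ?u * fst ?v = real_of_int (det3 b a c)"
    by (simp add: det3_def to_real2_def)
  ultimately show ?thesis by simp
qed

theorem proposition4:
  fixes t :: nat
  assumes "t \<ge> 2"
  shows "general_position (St t)"
  unfolding general_position_def
proof (intro allI impI notI)
  fix A assume sub: "A \<subseteq> St t" and card: "card A = 3" and col: "collinear (to_real2 ` A)"
  obtain a b c where abc: "A = {a, b, c}" "a \<noteq> b" "b \<noteq> c" "a \<noteq> c" using card by (auto simp: card_3_iff)
  have "collinear {to_real2 a, to_real2 b, to_real2 c}" using col abc by simp
  then have "det3 b a c = 0" by (rule collinear_det)
  moreover have "det3 b a c \<noteq> 0" using St_det[OF assms, of b a c] sub abc by auto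
  ultimately show False by simp
qed

end
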